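(* Let $T\colon X\to X$ be an expansive piecewise invertible map (with respect to $\mathcal U$) on a compact Hausdorff space $X$. Then the projection $X'\to\bar X$, $(x,\mathbf U)\mapsto\mathbf U$, is a homeomorphism; in particular $T'$ and $\bar T$ are topologically conjugate.
   Context: Let $X$ be compact Hausdorff. A set $U$ is regular open if $U=\mathrm{int}(\overline U)$. A regular open partition of $X$ is a finite family of nonempty, pairwise disjoint regular open sets whose closures cover $X$. For regular open partitions $\mathcal V,\mathcal W$, $\mathcal V\vee\mathcal W=\{V\cap W\ne\emptyset: V\in\mathcal V,W\in\mathcal W\}$; $\mathcal V\preceq\mathcal W$ means each element of $\mathcal W$ lies in a (necessarily unique) element of $\mathcal V$. A continuous $T\colon X\to X$ is piecewise invertible w.r.t. a regular open partition $\mathcal U=\{U_i\}_{i\in I}$, $C_i:=\overline{U_i}$, if each restriction $T_i\colon C_i\to T(C_i)$ is a homeomorphism and $T(U_i)=\mathrm{int}(T(C_i))$; it is expansive if there are a compatible metric $d$ and $c>1$ with $d(Tx,Tx')\ge c\,d(x,x')$ for all $i$ and $x,x'\in C_i$. For a regular open partition $\mathcal V=\{V_j\}$, put $\mathcal T_i=\{T(U_i\cap V_j):U_i\cap V_j\neq\emptyset\}\cup\{X\setminus T(C_i)\}$ (omitting empty sets), $T(\mathcal V)=\bigvee_i\mathcal T_i$, and $T^{-1}(\mathcal V)=\{T_i^{-1}(O): i\in I,\ O\in\mathcal V\vee T(\mathcal U),\ O\subseteq T(U_i)\}$; these are regular open partitions, and $T^\beta,T^{-\alpha}$ denote iterates of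 these operations. Set $\mathcal U_{m,n}=\bigvee_{0\le\alpha\le m,0\le\beta\le n}T^{-\alpha}(T^\beta(\mathcal U))$; for $(m',n')\ge(m,n)$ componentwise, $\mathcal U_{m,n}\preceq\mathcal U_{m',n'}$. Let $\bar X=\varprojlim\mathcal U_{m,n}$ (inverse limit of finite discrete sets), whose elements are families $\mathbf U=(U_{m,n})$, $U_{m,n}\in\mathcal U_{m,n}$, compatible under inclusion. Let $X'=\{(x,(U_{m,n}))\in X\times\bar X: x\in\overline{U_{m,n}}\ \forall m,n\}$ with the subspace topology, $\bar T\colon\bar X\to\bar X$, $\bar T((U_{m,n}))=(V_{m,n})$ where $V_{m,n}$ is the unique element of $\mathcal U_{m,n}$ containing $T(U_{m+1,n})$, and $T'(x,\mathbf U)=(Tx,\bar T\mathbf U)$. *)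

theory Defs
  imports "HOL-Analysis.Analysis"
begin

definition regular_open :: "'a::topological_space set \<Rightarrow> bool" where
  "regular_open U \<longleftrightarrow> U = interior (closure U)"

definition ro_partition :: "'a::topological_space set set \<Rightarrow> bool" where
  "ro_partition P \<longleftrightarrow> finite P \<and> (\<forall>U\<in>P. U \<noteq> {} \<and> regular_open U)
     \<and> pairwise disjnt P \<and> \<Union>(closure ` P) = UNIV"

definition pjoin :: "'a set set \<Rightarrow> 'a set set \<Rightarrow> 'a set set" where
  "pjoin V W = {A \<inter> B | A B. A \<in> V \<and> B \<in> W \<and> A \<inter> B \<noteq> {}}"

definition bigjoin :: "('i \<Rightarrow> 'a set set) \<Rightarrow> 'i set \<Rightarrow> 'a set set" where
  "bigjoin P I = {(\<Inter>i\<in>I. f i) | f. (\<forall>i\<in>I. f i \<in> P i)} - {{}}"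

definition prefines :: "'a set set \<Rightarrow> 'a set set \<Rightarrow> bool" where
  "prefines V W \<longleftrightarrow> (\<forall>B\<in>W. \<exists>A\<in>V. B \<subseteq> A)"

definition piecewise_invertible :: "('a::topological_space \<Rightarrow> 'a) \<Rightarrow> 'a set set \<Rightarrow> bool" where
  "piecewise_invertible T \<UU> \<longleftrightarrow> ro_partition \<UU> \<and> continuous_on UNIV T \<and>
     (\<forall>U\<in>\<UU>. (\<exists>g. homeomorphism (closure U) (T ` closure U) T g)
              \<and> T ` U = interior (T ` closure U))"

definition expansive_pw :: "('a::topological_space \<Rightarrow> 'a) \<Rightarrow> 'a set set \<Rightarrow> bool" where
  "expansive_pw T \<UU> \<longleftrightarrow> (\<exists>(d::'a \<Rightarrow> 'a \<Rightarrow> real) (c::real).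
     Metric_space UNIV d \<and> Metric_space.mtopology UNIV d = euclidean \<and> c > 1 \<and>
     (\<forall>U\<in>\<UU>. \<forall>x\<in>closure U. \<forall>x'\<in>closure U. d (T x) (T x') \<ge> c * d x x'))"

definition img_part :: "('a::topological_space \<Rightarrow> 'a) \<Rightarrow> 'a set set \<Rightarrow> 'a set set \<Rightarrow> 'a set set" where
  "img_part T \<UU> V = bigjoin (\<lambda>U. ({T ` (U \<inter> B) | B. B \<in> V \<and> U \<inter> B \<noteq> {}}
                                   \<union> {UNIV - T ` closure U}) - {{}}) \<UU>"

definition pre_part :: "('a::topological_space \<Rightarrow> 'a) \<Rightarrow> 'a set set \<Rightarrow> 'a set set \<Rightarrow> 'a set set" where
  "pre_part T \<UU> V = {{x \<in> closure U. T x \<in> Q} | U Q.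
       U \<in> \<UU> \<and> Q \<in> pjoin V (img_part T \<UU> \<UU>) \<and> Q \<subseteq> T ` U}"

definition Umn :: "('a::topological_space \<Rightarrow> 'a) \<Rightarrow> 'a set set \<Rightarrow> nat \<Rightarrow> nat \<Rightarrow> 'a set set" where
  "Umn T \<UU> m n = bigjoin (\<lambda>(a, b). (pre_part T \<UU> ^^ a) ((img_part T \<UU> ^^ b) \<UU>))
                          ({0..m} \<times> {0..n})"

text \<open>The inverse limit, as a set of compatible families, with the inverse-limit topology
  (subspace of the product of the finite discrete spaces).\<close>
definition Xbar :: "('a::topological_space \<Rightarrow> 'a) \<Rightarrow> 'a set set \<Rightarrow> (nat \<times> nat \<Rightarrow> 'a set) set" where
  "Xbar T \<UU> = {W. (\<forall>m n. W (m, n) \<in> Umn T \<UU> m n) \<and>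
      (\<forall>m n m' n'. m \<le> m' \<and> n \<le> n' \<longrightarrow> W (m', n') \<subseteq> W (m, n))}"

definition Xbar_top :: "('a::topological_space \<Rightarrow> 'a) \<Rightarrow> 'a set set \<Rightarrow> (nat \<times> nat \<Rightarrow> 'a set) topology" where
  "Xbar_top T \<UU> = subtopology
     (product_topology (\<lambda>(m, n). discrete_topology (Umn T \<UU> m n)) UNIV) (Xbar T \<UU>)"

definition Tbar :: "('a::topological_space \<Rightarrow> 'a) \<Rightarrow> 'a set set \<Rightarrow> (nat \<times> nat \<Rightarrow> 'a set) \<Rightarrow> (nat \<times> nat \<Rightarrow> 'a set)" where
  "Tbar T \<UU> W = (\<lambda>(m, n). THE V. V \<in> Umn T \<UU> m n \<and> T ` W (Suc m, n) \<subseteq> V)"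

definition Xprime :: "('a::topological_space \<Rightarrow> 'a) \<Rightarrow> 'a set set \<Rightarrow> ('a \<times> (nat \<times> nat \<Rightarrow> 'a set)) set" where
  "Xprime T \<UU> = {(x, W). W \<in> Xbar T \<UU> \<and> (\<forall>m n. x \<in> closure (W (m, n)))}"

definition Xprime_top :: "('a::topological_space \<Rightarrow> 'a) \<Rightarrow> 'a set set \<Rightarrow> ('a \<times> (nat \<times> nat \<Rightarrow> 'a set)) topology" where
  "Xprime_top T \<UU> = subtopology (prod_topology euclidean (Xbar_top T \<UU>)) (Xprime T \<UU>)"

definition Tprime :: "('a::topological_space \<Rightarrow> 'a) \<Rightarrow> 'a set set \<Rightarrow> 'a \<times> (nat \<times> nat \<Rightarrow> 'a set) \<Rightarrow> 'a \<times> (nat \<times> nat \<Rightarrow> 'a set)" where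
  "Tprime T \<UU> p = (T (fst p), Tbar T \<UU> (snd p))"

end

theory Submission
  imports Defs
begin

definition pdis :: "'a set set \<Rightarrow> bool" where
  "pdis P \<longleftrightarrow> (\<forall>A\<in>P. \<forall>B\<in>P. A \<noteq> B \<longrightarrow> A \<inter> B = {})"

lemma pdisD: "pdis P \<Longrightarrow> A \<in> P \<Longrightarrow> B \<in> P \<Longrightarrow> x \<in> A \<Longrightarrow> x \<in> B \<Longrightarrow> A = B"
  unfolding pdis_def by blast

lemma bigjoin_pdis:
  assumes "\<And>i. i \<in> I \<Longrightarrow> pdis (P i)"
  shows "pdis (bigjoin P I)"
  unfolding pdis_def
proof (intro ballI impI)
  fix A B assume A: "A \<in> bigjoin P I" and B: "B \<in> bigjoin P I" and ne: "A \<noteq> B"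
  obtain f where f: "A = (\<Inter>i\<in>I. f i)" "\<forall>i\<in>I. f i \<in> P i" using A unfolding bigjoin_def by blast
  obtain g where g: "B = (\<Inter>i\<in>I. g i)" "\<forall>i\<in>I. g i \<in> P i" using B unfolding bigjoin_def by blast
  have "\<exists>i\<in>I. f i \<noteq> g i"
  proof (rule ccontr)
    assume "\<not> ?thesis"
    then have "(\<Inter>i\<in>I. f i) = (\<Inter>i\<in>I. g i)" by auto
    with f g ne show False by simp
  qed
  then obtain i where i: "i \<in> I" "f i \<noteq> g i" by blast
  have "f i \<inter> g i = {}" using assms[OF i(1)] f g i unfolding pdis_def by blast
  moreover have "A \<subseteq> f i" "B \<subseteq> g i" using f g i by auto
  ultimately show "A \<inter> B = {}" by blast
qed

lemma bigjoin_ne: "A \<in> bigjoin P I \<Longrightarrow> A \<noteq> {}"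
  unfolding bigjoin_def by blast

lemma bigjoin_sub:
  assumes "A \<in> bigjoin P I" "i \<in> I"
  shows "\<exists>B\<in>P i. A \<subseteq> B"
  using assms unfolding bigjoin_def by blast

lemma bigjoin_mono:
  assumes "A \<in> bigjoin P I'" "I \<subseteq> I'"
  shows "\<exists>B\<in>bigjoin P I. A \<subseteq> B"
proof -
  obtain f where f: "A = (\<Inter>i\<in>I'. f i)" "\<forall>i\<in>I'. f i \<in> P i" "A \<noteq> {}"
    using assms(1) unfolding bigjoin_def by blast
  have "A \<subseteq> (\<Inter>i\<in>I. f i)" using f assms(2) by auto
  moreover have "(\<Inter>i\<in>I. f i) \<in> bigjoin P I"
    using f assms(2) calculation unfolding bigjoin_def by blast
  ultimately show ?thesis by blast
qed

lemma pjoin_pdis: "pdis V \<Longrightarrow> pdis W \<Longrightarrow> pdis (pjoin V W)"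
  unfolding pdis_def pjoin_def by blast

locale PI =
  fixes T :: "'a::topological_space \<Rightarrow> 'a" and \<UU> :: "'a set set"
  assumes Udis: "pdis \<UU>"
    and Uinj: "\<And>U. U \<in> \<UU> \<Longrightarrow> inj_on T (closure U)"
begin

lemma img_part_pdis:
  assumes "pdis V"
  shows "pdis (img_part T \<UU> V)"
  unfolding img_part_def
proof (rule bigjoin_pdis)
  fix U assume U: "U \<in> \<UU>"
  have sub: "U \<subseteq> closure U" by (rule closure_subset)
  show "pdis (({T ` (U \<inter> B) | B. B \<in> V \<and> U \<inter> B \<noteq> {}} \<union> {UNIV - T ` closure U}) - {{}})"
    unfolding pdis_def
  proof (intro ballI impI)
    fix X Y
    assume X: "X \<in> ({T ` (U \<inter> B) | B. B \<in> V \<and> U \<inter> B \<noteq> {}} \<union> {UNIV - T ` closure U}) - {{}}"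
      and Y: "Y \<in> ({T ` (U \<inter> B) | B. B \<in> V \<and> U \<inter> B \<noteq> {}} \<union> {UNIV - T ` closure U}) - {{}}"
      and ne: "X \<noteq> Y"
    have key: "T ` (U \<inter> B) \<inter> T ` (U \<inter> B') = {}" if "B \<in> V" "B' \<in> V" "B \<noteq> B'" for B B'
    proof -
      have "B \<inter> B' = {}" using assms that unfolding pdis_def by blast
      moreover have "inj_on T (closure U)" using Uinj U by blast
      ultimately show ?thesis using sub unfolding inj_on_def by blast
    qed
    show "X \<inter> Y = {}"
      using X Y ne key sub by blast
  qed
qed

lemma pre_part_pdis:
  assumes "pdis V"
  shows "pdis (pre_part T \<UU> V)"
  unfolding pdis_def
proof (intro ballI impI)
  fix X Y assume X: "X \<in> pre_part T \<UU> V" and Y: "Y \<in> pre_part T \<UU> V" and ne: "X \<noteq> Y"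
  obtain U1 Q1 where 1: "X = {x \<in> closure U1. T x \<in> Q1}" "U1 \<in> \<UU>"
    "Q1 \<in> pjoin V (img_part T \<UU> \<UU>)" "Q1 \<subseteq> T ` U1"
    using X unfolding pre_part_def by blast
  obtain U2 Q2 where 2: "Y = {x \<in> closure U2. T x \<in> Q2}" "U2 \<in> \<UU>"
    "Q2 \<in> pjoin V (img_part T \<UU> \<UU>)" "Q2 \<subseteq> T ` U2"
    using Y unfolding pre_part_def by blast
  have pj: "pdis (pjoin V (img_part T \<UU> \<UU>))"
    by (rule pjoin_pdis[OF assms img_part_pdis[OF Udis]])
  show "X \<inter> Y = {}"
  proof (rule ccontr)
    assume "X \<inter> Y \<noteq> {}"
    then obtain x where x: "x \<in> X" "x \<in> Y" by blast
    have inU: "x \<in> U" if h: "x \<in> closure U" "T x \<in> Q" "Q \<subseteq> T ` U" "U \<in> \<UU>" for U Q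
    proof -
      obtain u where u: "u \<in> U" "T x = T u" using h by blast
      have "u \<in> closure U" using u closure_subset by blast
      then have "x = u" using Uinj[OF h(4)] h(1) u unfolding inj_on_def by blast
      then show ?thesis using u by simp
    qed
    have "x \<in> U1" using inU x 1 by blast
    moreover have "x \<in> U2" using inU x 2 by blast
    ultimately have "U1 = U2" using pdisD[OF Udis 1(2) 2(2)] by blast
    moreover have "Q1 = Q2" using pdisD[OF pj 1(3) 2(3), of "T x"] x 1 2 by blast
    ultimately show False using ne 1 2 by simp
  qed
qed

lemma iter_pdis: "pdis ((pre_part T \<UU> ^^ a) ((img_part T \<UU> ^^ b) \<UU>))"
proof -
  have "pdis ((img_part T \<UU> ^^ b) \<UU>)"
    by (induction b) (simp_all add: Udis img_part_pdis)
  then show ?thesis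
    by (induction a) (simp_all add: pre_part_pdis)
qed

lemma Umn_pdis: "pdis (Umn T \<UU> m n)"
  unfolding Umn_def by (rule bigjoin_pdis) (auto simp: iter_pdis)


lemma pre_image: "S \<in> pre_part T \<UU> V \<Longrightarrow> \<exists>A\<in>V. T ` S \<subseteq> A"
  unfolding pre_part_def pjoin_def by blast

lemma Tstep:
  assumes "W' \<in> Umn T \<UU> (Suc m) n"
  shows "\<exists>V\<in>Umn T \<UU> m n. T ` W' \<subseteq> V"
proof -
  let ?P = "\<lambda>(a,b). (pre_part T \<UU> ^^ a) ((img_part T \<UU> ^^ b) \<UU>)"
  let ?I' = "{0..Suc m}\<times>{0..n}" and ?I = "{0..m}\<times>{0..n}"
  obtain f where f: "W' = (\<Inter>i\<in>?I'. f i)" "\<forall>i\<in>?I'. f i \<in> ?P i" "W' \<noteq> {}"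
    using assms unfolding Umn_def bigjoin_def by blast
  have "\<forall>i\<in>?I. \<exists>A\<in>?P i. T ` f (Suc (fst i), snd i) \<subseteq> A"
  proof
    fix i assume i: "i \<in> ?I"
    obtain a b where ab: "i = (a, b)" by (cases i)
    have "(Suc a, b) \<in> ?I'" using i ab by auto
    then have "f (Suc a, b) \<in> ?P (Suc a, b)" using f(2) by blast
    then have "f (Suc a, b) \<in> pre_part T \<UU> (?P (a,b))" by simp
    then show "\<exists>A\<in>?P i. T ` f (Suc (fst i), snd i) \<subseteq> A"
      using pre_image ab by auto
  qed
  then obtain g where g: "\<forall>i\<in>?I. g i \<in> ?P i \<and> T ` f (Suc (fst i), snd i) \<subseteq> g i"
    using bchoice[of ?I "\<lambda>i A. A \<in> ?P i \<and> T ` f (Suc (fst i), snd i) \<subseteq> A"] by blast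
  have "T ` W' \<subseteq> (\<Inter>i\<in>?I. g i)"
  proof (intro subsetI INT_I)
    fix y i assume y: "y \<in> T ` W'" and i: "i \<in> ?I"
    have "(Suc (fst i), snd i) \<in> ?I'" using i by auto
    then have "W' \<subseteq> f (Suc (fst i), snd i)" using f(1) by blast
    then show "y \<in> g i" using y g i by blast
  qed
  moreover have "(\<Inter>i\<in>?I. g i) \<noteq> {}" using calculation f(3) by blast
  moreover have "\<forall>i\<in>?I. g i \<in> ?P i" using g by blast
  ultimately have "(\<Inter>i\<in>?I. g i) \<in> bigjoin ?P ?I"
    unfolding bigjoin_def by blast
  then have "(\<Inter>i\<in>?I. g i) \<in> Umn T \<UU> m n" unfolding Umn_def .
  then show ?thesis using \<open>T ` W' \<subseteq> (\<Inter>i\<in>?I. g i)\<close> by blast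
qed

lemma Umn_mono:
  assumes "A \<in> Umn T \<UU> m' n'" "m \<le> m'" "n \<le> n'"
  shows "\<exists>B\<in>Umn T \<UU> m n. A \<subseteq> B"
proof -
  have "{0..m}\<times>{0..n} \<subseteq> {0..m'}\<times>{0..n'}" using assms(2,3) by auto
  from bigjoin_mono[OF assms(1)[unfolded Umn_def] this] show ?thesis unfolding Umn_def .
qed

lemma Xbar_in: "W \<in> Xbar T \<UU> \<Longrightarrow> W (m, n) \<in> Umn T \<UU> m n"
  unfolding Xbar_def by (simp only: mem_Collect_eq)

lemma Xbar_mono: "W \<in> Xbar T \<UU> \<Longrightarrow> m \<le> m' \<Longrightarrow> n \<le> n' \<Longrightarrow> W (m', n') \<subseteq> W (m, n)"
  unfolding Xbar_def mem_Collect_eq by (elim conjE allE impE) auto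

lemma Xbar_ne: "W \<in> Xbar T \<UU> \<Longrightarrow> W (m, n) \<noteq> {}"
  using Xbar_in[of W m n] bigjoin_ne unfolding Umn_def by metis

lemma Tbar_spec:
  assumes W: "W \<in> Xbar T \<UU>"
  shows "Tbar T \<UU> W (m, n) \<in> Umn T \<UU> m n \<and> T ` W (Suc m, n) \<subseteq> Tbar T \<UU> W (m, n)"
proof -
  have Wi: "W (Suc m, n) \<in> Umn T \<UU> (Suc m) n" using Xbar_in[OF W] .
  have ne: "T ` W (Suc m, n) \<noteq> {}" using Xbar_ne[OF W] by blast
  obtain V where V: "V \<in> Umn T \<UU> m n" "T ` W (Suc m, n) \<subseteq> V" using Tstep[OF Wi] by blast
  have uniq: "V' = V" if h: "V' \<in> Umn T \<UU> m n" "T ` W (Suc m, n) \<subseteq> V'" for V'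
  proof -
    obtain y where y: "y \<in> T ` W (Suc m, n)" using ne by blast
    have "y \<in> V'" using y h(2) by (rule subsetD[rotated])
    moreover have "y \<in> V" using y V(2) by (rule subsetD[rotated])
    ultimately show ?thesis by (rule pdisD[OF Umn_pdis h(1) V(1)])
  qed
  have ex: "\<exists>!V. V \<in> Umn T \<UU> m n \<and> T ` W (Suc m, n) \<subseteq> V"
  proof (rule ex1I[of _ V])
    show "V \<in> Umn T \<UU> m n \<and> T ` W (Suc m, n) \<subseteq> V" using V by (rule conjI)
  next
    fix x assume "x \<in> Umn T \<UU> m n \<and> T ` W (Suc m, n) \<subseteq> x"
    then show "x = V" by (intro uniq) (erule conjunct1, erule conjunct2)
  qed
  have eq: "Tbar T \<UU> W (m, n) = (THE V. V \<in> Umn T \<UU> m n \<and> T ` W (Suc m, n) \<subseteq> V)"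
    unfolding Tbar_def by simp
  show ?thesis unfolding eq by (rule theI'[OF ex])
qed

lemma Tbar_Xbar:
  assumes W: "W \<in> Xbar T \<UU>"
  shows "Tbar T \<UU> W \<in> Xbar T \<UU>"
  unfolding Xbar_def
proof (intro CollectI conjI allI impI)
  fix m n show "Tbar T \<UU> W (m, n) \<in> Umn T \<UU> m n" using Tbar_spec[OF W] by blast
next
  fix m n m' n' :: nat assume le: "m \<le> m' \<and> n \<le> n'"
  let ?V = "Tbar T \<UU> W (m, n)" and ?V' = "Tbar T \<UU> W (m', n')"
  have V: "?V \<in> Umn T \<UU> m n" "T ` W (Suc m, n) \<subseteq> ?V" using Tbar_spec[OF W] by blast+
  have V': "?V' \<in> Umn T \<UU> m' n'" "T ` W (Suc m', n') \<subseteq> ?V'" using Tbar_spec[OF W] by blast+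
  obtain B where B: "B \<in> Umn T \<UU> m n" "?V' \<subseteq> B" using Umn_mono[OF V'(1)] le by blast
  have "W (Suc m', n') \<subseteq> W (Suc m, n)" using Xbar_mono[OF W] le by auto
  moreover obtain x where "x \<in> W (Suc m', n')" using Xbar_ne[OF W] by blast
  ultimately have "T x \<in> B" "T x \<in> ?V" using B V V' by blast+
  then have "B = ?V" using pdisD[OF Umn_pdis B(1) V(1)] by blast
  then show "?V' \<subseteq> ?V" using B by simp
qed

lemma diam:
  fixes d :: "'a \<Rightarrow> 'a \<Rightarrow> real" and c M :: real
  assumes cpos: "c > 0"
    and expd: "\<forall>U\<in>\<UU>. \<forall>x\<in>closure U. \<forall>x'\<in>closure U. d (T x) (T x') \<ge> c * d x x'"
    and bound: "\<forall>x y. d x y \<le> M" and cont: "continuous_on UNIV T"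
  shows "S \<in> (pre_part T \<UU> ^^ a) V \<Longrightarrow> x \<in> closure S \<Longrightarrow> y \<in> closure S \<Longrightarrow> d x y \<le> M / c ^ a"
proof (induction a arbitrary: S x y)
  case 0
  have "d x y \<le> M" using bound by blast
  then show ?case by simp
next
  case (Suc a)
  from Suc.prems(1) have "S \<in> pre_part T \<UU> ((pre_part T \<UU> ^^ a) V)" by simp
  then obtain U Q where S: "S = {x \<in> closure U. T x \<in> Q}" "U \<in> \<UU>"
    "Q \<in> pjoin ((pre_part T \<UU> ^^ a) V) (img_part T \<UU> \<UU>)"
    unfolding pre_part_def by blast
  then obtain A where A: "A \<in> (pre_part T \<UU> ^^ a) V" "Q \<subseteq> A"
    unfolding pjoin_def by blast
  have "S \<subseteq> closure U" using S(1) by blast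
  then have clS: "closure S \<subseteq> closure U" by (simp add: closure_minimal)
  have "T ` S \<subseteq> closure A" using S(1) A(2) closure_subset by blast
  then have TclS: "T ` closure S \<subseteq> closure A"
    by (rule image_closure_subset[OF continuous_on_subset[OF cont] closed_closure, rotated]) simp
  have "d (T x) (T y) \<le> M / c ^ a"
    using Suc.IH[OF A(1)] TclS Suc.prems(2,3) by blast
  moreover have "c * d x y \<le> d (T x) (T y)"
    using expd S(2) clS Suc.prems(2,3) by blast
  ultimately have "c * d x y \<le> M / c ^ a" by linarith
  then have m: "c ^ a * (c * d x y) \<le> M" using cpos by (simp add: pos_le_divide_eq mult.commute)
  have e: "d x y * c ^ Suc a = c ^ a * (c * d x y)" by (simp add: mult_ac)
  have "0 < c ^ Suc a" using cpos by simp
  have "d x y * c ^ Suc a \<le> M" unfolding e by (rule m)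
  then show ?case using \<open>0 < c ^ Suc a\<close> by (simp only: pos_le_divide_eq)
qed

end

lemma Xbar_in': "W \<in> Xbar T \<UU> \<Longrightarrow> W (m, n) \<in> Umn T \<UU> m n"
  unfolding Xbar_def by (simp only: mem_Collect_eq)

theorem lemma5p6:
  fixes T :: "'a::t2_space \<Rightarrow> 'a" and \<UU> :: "'a set set"
  assumes "compact (UNIV :: 'a set)"
    and "piecewise_invertible T \<UU>"
    and "expansive_pw T \<UU>"
  shows "homeomorphic_map (Xprime_top T \<UU>) (Xbar_top T \<UU>) snd
    \<and> Tprime T \<UU> ` Xprime T \<UU> \<subseteq> Xprime T \<UU>
    \<and> Tbar T \<UU> ` Xbar T \<UU> \<subseteq> Xbar T \<UU>
    \<and> (\<forall>p\<in>Xprime T \<UU>. snd (Tprime T \<UU> p) = Tbar T \<UU> (snd p))"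
proof -
  from assms(2) have ro: "ro_partition \<UU>" and cont: "continuous_on UNIV T"
    and hom: "\<forall>U\<in>\<UU>. (\<exists>g. homeomorphism (closure U) (T ` closure U) T g)"
    unfolding piecewise_invertible_def by blast+
  have pw: "pairwise disjnt \<UU>" using ro unfolding ro_partition_def by (elim conjE)
  have Udis: "pdis \<UU>"
    unfolding pdis_def
  proof (intro ballI impI)
    fix A B assume "A \<in> \<UU>" "B \<in> \<UU>" "A \<noteq> B"
    then have "disjnt A B" by (rule pairwiseD[OF pw])
    then show "A \<inter> B = {}" by (simp add: disjnt_def)
  qed
  have Uinj: "inj_on T (closure U)" if hU: "U \<in> \<UU>" for U
  proof -
    obtain g where g: "homeomorphism (closure U) (T ` closure U) T g" using hom hU by blast
    show ?thesis by (rule inj_on_inverseI[of _ g]) (rule homeomorphism_apply1[OF g])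
  qed
  interpret PI T \<UU> by unfold_locales (rule Udis, erule Uinj)
  from assms(3) obtain d :: "'a \<Rightarrow> 'a \<Rightarrow> real" and c :: real where
    ms: "Metric_space UNIV d" and top: "Metric_space.mtopology UNIV d = euclidean"
    and c1: "c > 1"
    and expd: "\<forall>U\<in>\<UU>. \<forall>x\<in>closure U. \<forall>x'\<in>closure U. d (T x) (T x') \<ge> c * d x x'"
    unfolding expansive_pw_def by blast
  have "compactin euclidean (UNIV::'a set)" using assms(1) by simp
  then have "compactin (Metric_space.mtopology UNIV d) UNIV" by (simp only: top)
  then have "Metric_space.mbounded UNIV d UNIV"
    by (rule Metric_space.compactin_imp_mbounded[OF ms])
  then have "\<exists>M. \<forall>x y. d x y \<le> M"
    using Metric_space.mbounded_alt[OF ms, of UNIV] by auto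
  then obtain M where M: "\<forall>x y. d x y \<le> M" by blast
  have cpos: "0 < c" using c1 by simp
  have D: "d x y \<le> M / c ^ a" if "S \<in> (pre_part T \<UU> ^^ a) V" "x \<in> closure S" "y \<in> closure S" for S a V x y
    by (rule diam[OF cpos expd M cont that])

  have uniq: "x = y" if W: "W \<in> Xbar T \<UU>" and x: "\<forall>m n. x \<in> closure (W (m, n))"
    and y: "\<forall>m n. y \<in> closure (W (m, n))" for W x y
  proof -
    have bnd: "d x y \<le> M / c ^ a" for a
    proof -
      have "W (a, 0) \<in> Umn T \<UU> a 0" by (rule Xbar_in[OF W])
      then have "W (a, 0) \<in> bigjoin (\<lambda>(a, b). (pre_part T \<UU> ^^ a) ((img_part T \<UU> ^^ b) \<UU>)) ({0..a}\<times>{0..0})"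
        unfolding Umn_def .
      then have "\<exists>B\<in>(\<lambda>(a, b). (pre_part T \<UU> ^^ a) ((img_part T \<UU> ^^ b) \<UU>)) (a, 0). W (a, 0) \<subseteq> B"
        by (rule bigjoin_sub) simp
      then obtain B where B: "B \<in> (pre_part T \<UU> ^^ a) ((img_part T \<UU> ^^ 0) \<UU>)" "W (a, 0) \<subseteq> B"
        by (simp only: case_prod_conv) blast
      have "closure (W (a, 0)) \<subseteq> closure B" using B(2) by (rule closure_mono)
      then show ?thesis using D[OF B(1)] x y by blast
    qed
    have "d x y \<le> 0"
    proof (rule ccontr)
      assume "\<not> d x y \<le> 0"
      then have pos: "d x y > 0" by simp
      obtain a where a: "M / d x y < c ^ a" using real_arch_pow[OF c1] by blast
      have "M < c ^ a * d x y" using a pos by (simp add: divide_less_eq)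
      then have "M / c ^ a < d x y" using c1 by (simp add: divide_less_eq mult.commute)
      with bnd[of a] show False by simp
    qed
    moreover have "d x y \<ge> 0" using Metric_space.nonneg[OF ms] by blast
    ultimately have "d x y = 0" by simp
    then show ?thesis using Metric_space.zero[OF ms] by blast
  qed

  have exist: "\<exists>x. \<forall>m n. x \<in> closure (W (m, n))" if W: "W \<in> Xbar T \<UU>" for W
  proof -
    let ?A = "range (\<lambda>k. closure (W k))"
    have "UNIV \<inter> \<Inter>?A \<noteq> {}"
    proof (rule compact_fip[THEN iffD1, OF assms(1), rule_format])
      show "\<And>a. a \<in> ?A \<Longrightarrow> closed a" by auto
    next
      fix B assume B: "B \<subseteq> ?A" "finite B"
      then obtain K where K: "finite K" "B = (\<lambda>k. closure (W k)) ` K"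
        by (meson finite_subset_image)
      obtain N where N: "\<forall>k\<in>K. fst k \<le> N \<and> snd k \<le> N"
      proof -
        have "finite (fst ` K \<union> snd ` K)" using K(1) by simp
        then obtain N where "\<forall>i\<in>fst ` K \<union> snd ` K. i \<le> N"
          using finite_nat_set_iff_bounded_le by blast
        then show ?thesis using that by blast
      qed
      have "W (N, N) \<subseteq> \<Inter>B"
      proof
        fix z assume z: "z \<in> W (N, N)"
        show "z \<in> \<Inter>B"
        proof
          fix b assume "b \<in> B"
          then obtain k where k: "k \<in> K" "b = closure (W k)" using K by blast
          obtain m n where mn: "k = (m, n)" by (cases k)
          have "m \<le> N" "n \<le> N" using N k(1) mn by auto
          then have "W (N, N) \<subseteq> W (m, n)" by (rule Xbar_mono[OF W])
          then show "z \<in> b" using z k(2) mn closure_subset by blast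
        qed
      qed
      then show "UNIV \<inter> \<Inter>B \<noteq> {}" using Xbar_ne[OF W] by blast
    qed
    then obtain x where "x \<in> \<Inter>?A" by blast
    then show ?thesis by blast
  qed

  have topXbar: "topspace (Xbar_top T \<UU>) = Xbar T \<UU>"
  proof -
    have "Xbar T \<UU> \<subseteq> topspace (product_topology (\<lambda>(m, n). discrete_topology (Umn T \<UU> m n)) UNIV)"
    proof
      fix W assume W: "W \<in> Xbar T \<UU>"
      have "W k \<in> (case k of (m, n) \<Rightarrow> Umn T \<UU> m n)" for k
        by (cases k) (simp add: Xbar_in[OF W])
      then show "W \<in> topspace (product_topology (\<lambda>(m, n). discrete_topology (Umn T \<UU> m n)) UNIV)"
        by (auto simp: PiE_def Pi_def Xbar_in[OF W])
    qed
    then show ?thesis unfolding Xbar_top_def by (simp add: Int_absorb1)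
  qed
  have topXp: "topspace (Xprime_top T \<UU>) = Xprime T \<UU>"
    unfolding Xprime_top_def using topXbar by (auto simp: Xprime_def)

  have contsnd: "continuous_map (Xprime_top T \<UU>) (Xbar_top T \<UU>) snd"
    unfolding Xprime_top_def by (rule continuous_map_from_subtopology[OF continuous_map_snd])

  have closedXp: "closedin (prod_topology euclidean (Xbar_top T \<UU>)) (Xprime T \<UU>)"
  proof -
    let ?P = "prod_topology euclidean (Xbar_top T \<UU>)"
    have sub: "Xprime T \<UU> \<subseteq> topspace ?P" using topXbar by (auto simp: Xprime_def)
    have "openin ?P (topspace ?P - Xprime T \<UU>)"
    proof (subst openin_subopen, intro ballI)
      fix p assume p: "p \<in> topspace ?P - Xprime T \<UU>"
      obtain x W where pW: "p = (x, W)" by (cases p)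
      have W: "W \<in> Xbar T \<UU>" using p pW topXbar by auto
      then obtain m n where mn: "x \<notin> closure (W (m, n))" using p pW by (auto simp: Xprime_def)
      let ?N = "(- closure (W (m, n))) \<times> {W' \<in> topspace (Xbar_top T \<UU>). W' (m, n) \<in> {W (m, n)}}"
      have cproj: "continuous_map (Xbar_top T \<UU>) (discrete_topology (Umn T \<UU> m n)) (\<lambda>W. W (m, n))"
        unfolding Xbar_top_def
        using continuous_map_from_subtopology[OF continuous_map_product_projection[of "(m,n)" UNIV "\<lambda>(m, n). discrete_topology (Umn T \<UU> m n)"]]
        by simp
      have "openin (Xbar_top T \<UU>) {W' \<in> topspace (Xbar_top T \<UU>). W' (m, n) \<in> {W (m, n)}}"
        by (rule openin_continuous_map_preimage[OF cproj]) (simp add: Xbar_in[OF W])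
      then have "openin ?P ?N" by (simp add: openin_prod_Times_iff open_Compl)
      moreover have "p \<in> ?N" using pW mn W topXbar by simp
      moreover have "?N \<subseteq> topspace ?P - Xprime T \<UU>" by (auto simp: Xprime_def) metis
      ultimately show "\<exists>Z. openin ?P Z \<and> p \<in> Z \<and> Z \<subseteq> topspace ?P - Xprime T \<UU>" by blast
    qed
    then show ?thesis using sub by (simp add: closedin_def)
  qed

  have cmap: "closed_map (Xprime_top T \<UU>) (Xbar_top T \<UU>) snd"
    unfolding closed_map_def
  proof (intro allI impI)
    fix U assume "closedin (Xprime_top T \<UU>) U"
    then have "closedin (prod_topology euclidean (Xbar_top T \<UU>)) U"
      unfolding Xprime_top_def using closedin_closed_subtopology[OF closedXp] by blast
    moreover have "closed_map (prod_topology (euclidean :: 'a topology) (Xbar_top T \<UU>)) (Xbar_top T \<UU>) snd"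
      by (rule closed_map_snd) (simp add: compact_space_def assms(1))
    ultimately show "closedin (Xbar_top T \<UU>) (snd ` U)" unfolding closed_map_def by blast
  qed

  have surj: "snd ` topspace (Xprime_top T \<UU>) = topspace (Xbar_top T \<UU>)"
  proof
    show "snd ` topspace (Xprime_top T \<UU>) \<subseteq> topspace (Xbar_top T \<UU>)"
      using topXp topXbar by (auto simp: Xprime_def)
  next
    show "topspace (Xbar_top T \<UU>) \<subseteq> snd ` topspace (Xprime_top T \<UU>)"
    proof
      fix W assume "W \<in> topspace (Xbar_top T \<UU>)"
      then have W: "W \<in> Xbar T \<UU>" using topXbar by simp
      obtain x where "\<forall>m n. x \<in> closure (W (m, n))" using exist[OF W] by blast
      then have "(x, W) \<in> Xprime T \<UU>" using W by (simp add: Xprime_def)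
      then show "W \<in> snd ` topspace (Xprime_top T \<UU>)" using topXp by force
    qed
  qed
  have inj: "inj_on snd (topspace (Xprime_top T \<UU>))"
  proof (rule inj_onI)
    fix p q assume p: "p \<in> topspace (Xprime_top T \<UU>)" and q: "q \<in> topspace (Xprime_top T \<UU>)"
      and eq: "snd p = snd q"
    obtain x W where pW: "p = (x, W)" by (cases p)
    obtain y W' where qW: "q = (y, W')" by (cases q)
    have "W' = W" using eq pW qW by simp
    then have "W \<in> Xbar T \<UU>" "\<forall>m n. x \<in> closure (W (m, n))" "\<forall>m n. y \<in> closure (W (m, n))"
      using p q pW qW topXp by (auto simp: Xprime_def)
    then have "x = y" by (rule uniq)
    then show "p = q" using pW qW \<open>W' = W\<close> by simp
  qed
  have H: "homeomorphic_map (Xprime_top T \<UU>) (Xbar_top T \<UU>) snd"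
    by (rule bijective_closed_imp_homeomorphic_map[OF contsnd cmap surj inj])

  have TX: "Tbar T \<UU> ` Xbar T \<UU> \<subseteq> Xbar T \<UU>" using Tbar_Xbar by blast
  have TP: "Tprime T \<UU> ` Xprime T \<UU> \<subseteq> Xprime T \<UU>"
  proof
    fix q assume "q \<in> Tprime T \<UU> ` Xprime T \<UU>"
    then obtain x W where xW: "(x, W) \<in> Xprime T \<UU>" "q = Tprime T \<UU> (x, W)" by auto
    have W: "W \<in> Xbar T \<UU>" and xc: "\<forall>m n. x \<in> closure (W (m, n))" using xW(1) by (auto simp: Xprime_def)
    have "T x \<in> closure (Tbar T \<UU> W (m, n))" for m n
    proof -
      have "T ` W (Suc m, n) \<subseteq> closure (Tbar T \<UU> W (m, n))"
        using Tbar_spec[OF W, of m n] closure_subset by blast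
      then have "T ` closure (W (Suc m, n)) \<subseteq> closure (Tbar T \<UU> W (m, n))"
        by (rule image_closure_subset[OF continuous_on_subset[OF cont] closed_closure, rotated]) simp
      then show ?thesis using xc by blast
    qed
    then show "q \<in> Xprime T \<UU>" using xW(2) Tbar_Xbar[OF W] by (simp add: Xprime_def Tprime_def)
  qed
  show ?thesis using H TX TP by (simp add: Tprime_def)
qed

end
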